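(* Let $r\ge 2$ and, for $1\le j\le r$, let $(\alpha^{[j]}_{h})_{h\in\mathbb{N}}$ be sequences of positive reals with $\alpha^{[j]}_h\neq\alpha^{[j]}_\ell$ for $1\le h<\ell<\infty$. In the $r$-type urn model II with these weights, started from $\mathbf{n}=(n_1,\dots,n_r)$ with all $n_j\ge1$, let $\mathbf{X}_{\mathbf{n}}=(X^{[1]}_{\mathbf{n}},\dots,X^{[r-1]}_{\mathbf{n}})$. Then for all $\mathbf{k}=(k_1,\dots,k_{r-1})$ with $1\le k_j\le n_j$, \[ \mathbb{P}\{\mathbf{X}_{\mathbf{n}}=\mathbf{k}\}=\sum_{\ell_1=k_1}^{n_1}\cdots\sum_{\ell_{r-1}=k_{r-1}}^{n_{r-1}}\frac{\Big(\prod_{j=1}^{r-1}\alpha^{[j]}_{k_j}\Big)\prod_{j=1}^{r-1}\big(\alpha^{[j]}_{\ell_j}\big)^{n_j-k_j+n_r-1}}{\prod_{f=1}^{n_r}\Big(\prod_{j=1}^{r-1}\alpha^{[j]}_{\ell_j}+\alpha^{[r]}_f\sum_{g=1}^{r-1}\frac{\prod_{j=1}^{r-1}\alpha^{[j]}_{\ell_j}}{\alpha^{[g]}_{\ell_g}}\Big)\prod_{j=1}^{r-1}\prod_{\substack{h_j=k_j\\ h_j\neq\ell_j}}^{n_j}\big(\alpha^{[j]}_{\ell_j}-\alpha^{[j]}_{h_j}\big)}. \]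
   Context: $r$-type urn model II: the urn contains balls of types $1,\dots,r$, initially $n_j$ balls of type $j$. At each step, if the urn contains $n'_j$ balls of type $j$ ($1\le j\le r$), a ball of type $\ell$ is drawn with probability \[ \frac{(1-\delta_{n'_\ell,0})\prod_{j\neq\ell}(\alpha^{[j]}_{n'_j})^{1-\delta_{n'_j,0}}}{\sum_{h=1}^{r}(1-\delta_{n'_h,0})\prod_{j\neq h}(\alpha^{[j]}_{n'_j})^{1-\delta_{n'_j,0}}} \] ($\delta$ the Kronecker delta) and discarded. The process stops when either all type $r$ balls have been drawn or all balls of types $1,\dots,r-1$ have been drawn. $X^{[j]}_{\mathbf{n}}$ is the number of type $j$ balls in the urn when the process stops. Empty products equal $1$. *)

theory Defs
  imports Complex_Main "HOL-Library.FuncSet"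
begin

text \<open>States of the urn: m :: nat \<Rightarrow> nat, m j = number of balls of type j (1 \<le> j \<le> r).
  Weights: \<alpha> j h = alpha^[j]_h.\<close>

definition urn_weight :: "nat \<Rightarrow> (nat \<Rightarrow> nat \<Rightarrow> real) \<Rightarrow> (nat \<Rightarrow> nat) \<Rightarrow> nat \<Rightarrow> real" where
  "urn_weight r \<alpha> m l =
     (if m l = 0 then 0
      else (\<Prod>j\<in>{1..r} - {l}. (if m j = 0 then 1 else \<alpha> j (m j))))"

definition urn_draw_prob :: "nat \<Rightarrow> (nat \<Rightarrow> nat \<Rightarrow> real) \<Rightarrow> (nat \<Rightarrow> nat) \<Rightarrow> nat \<Rightarrow> real" where
  "urn_draw_prob r \<alpha> m l = urn_weight r \<alpha> m l / (\<Sum>h\<in>{1..r}. urn_weight r \<alpha> m h)"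

definition urn_stopped :: "nat \<Rightarrow> (nat \<Rightarrow> nat) \<Rightarrow> bool" where
  "urn_stopped r m \<longleftrightarrow> m r = 0 \<or> (\<forall>j\<in>{1..<r}. m j = 0)"

text \<open>Running with N = total number of balls always reaches the stopping time.\<close>

primrec urn_prob :: "nat \<Rightarrow> nat \<Rightarrow> (nat \<Rightarrow> nat \<Rightarrow> real) \<Rightarrow> (nat \<Rightarrow> nat) \<Rightarrow> (nat \<Rightarrow> nat) \<Rightarrow> real" where
  "urn_prob 0 r \<alpha> m k = (if \<forall>j\<in>{1..<r}. m j = k j then 1 else 0)"
| "urn_prob (Suc N) r \<alpha> m k =
     (if urn_stopped r m then (if \<forall>j\<in>{1..<r}. m j = k j then 1 else 0)
      else (\<Sum>l\<in>{1..r}. urn_draw_prob r \<alpha> m l * urn_prob N r \<alpha> (m(l := m l - 1)) k))"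

definition urnII_prob :: "nat \<Rightarrow> (nat \<Rightarrow> nat \<Rightarrow> real) \<Rightarrow> (nat \<Rightarrow> nat) \<Rightarrow> (nat \<Rightarrow> nat) \<Rightarrow> real" where
  "urnII_prob r \<alpha> n k = urn_prob (\<Sum>j\<in>{1..r}. n j) r \<alpha> n k"

end

theory Submission
  imports Defs
begin

definition dd :: "(nat \<Rightarrow> real) \<Rightarrow> nat set \<Rightarrow> real" where
  "dd x S = (\<Sum>l\<in>S. 1 / (\<Prod>h\<in>S-{l}. (x h - x l)))"

lemma dd_single: "dd x {a} = 1" by (simp add: dd_def)

lemma dd_ins:
  assumes "finite T" "b \<notin> T"
  shows "dd x (insert b T) = 1 / (\<Prod>h\<in>T. (x h - x b)) + (\<Sum>l\<in>T. 1 / ((x b - x l) * (\<Prod>h\<in>T-{l}. (x h - x l))))"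
proof -
  have "dd x (insert b T) = 1 / (\<Prod>h\<in>insert b T - {b}. (x h - x b)) + (\<Sum>l\<in>T. 1 / (\<Prod>h\<in>insert b T-{l}. (x h - x l)))"
    unfolding dd_def using assms by (simp add: sum.insert)
  also have "(\<Sum>l\<in>T. 1 / (\<Prod>h\<in>insert b T-{l}. (x h - x l))) = (\<Sum>l\<in>T. 1 / ((x b - x l) * (\<Prod>h\<in>T-{l}. (x h - x l))))"
  proof (rule sum.cong[OF refl])
    fix l assume "l \<in> T"
    then have "insert b T - {l} = insert b (T - {l})" using assms by auto
    then show "1 / (\<Prod>h\<in>insert b T-{l}. (x h - x l)) = 1 / ((x b - x l) * (\<Prod>h\<in>T-{l}. (x h - x l)))"
      using assms by (simp add: prod.insert)
  qed
  also have "insert b T - {b} = T" using assms by auto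
  finally show ?thesis .
qed

lemma dd_rec:
  assumes fin: "finite T" and "a \<notin> T" "b \<notin> T" "a \<noteq> b" and inj: "inj_on x (insert a (insert b T))"
  shows "(x a - x b) * dd x (insert a (insert b T)) = dd x (insert b T) - dd x (insert a T)"
proof -
  define P where "P l = (\<Prod>h\<in>T-{l}. (x h - x l))" for l
  have Pnz: "P l \<noteq> 0" if "l \<in> T" for l
    unfolding P_def using that fin inj by (auto simp: prod_zero_iff inj_on_def)
  have Qa: "(\<Prod>h\<in>T. (x h - x a)) \<noteq> 0" using fin inj \<open>a \<notin> T\<close> by (auto simp: prod_zero_iff inj_on_def)
  have Qb: "(\<Prod>h\<in>T. (x h - x b)) \<noteq> 0" using fin inj \<open>b \<notin> T\<close> by (auto simp: prod_zero_iff inj_on_def)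
  have ab: "x a \<noteq> x b" using inj \<open>a \<noteq> b\<close> by (auto simp: inj_on_def)
  have dxa: "x a \<noteq> x l" "x b \<noteq> x l" if "l \<in> T" for l
    using inj that \<open>a \<notin> T\<close> \<open>b \<notin> T\<close> by (auto simp: inj_on_def)
  have bT: "b \<notin> insert a T" using assms by auto
  have e1: "dd x (insert b (insert a T)) = 1 / (\<Prod>h\<in>insert a T. (x h - x b)) + (\<Sum>l\<in>insert a T. 1 / ((x b - x l) * (\<Prod>h\<in>insert a T-{l}. (x h - x l))))"
    by (rule dd_ins[OF _ bT]) (use fin in simp)
  have e2: "(\<Sum>l\<in>insert a T. 1 / ((x b - x l) * (\<Prod>h\<in>insert a T-{l}. (x h - x l))))
     = 1 / ((x b - x a) * (\<Prod>h\<in>T. (x h - x a))) + (\<Sum>l\<in>T. 1 / ((x b - x l) * ((x a - x l) * P l)))"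
  proof -
    have "(\<Sum>l\<in>insert a T. 1 / ((x b - x l) * (\<Prod>h\<in>insert a T-{l}. (x h - x l))))
      = 1 / ((x b - x a) * (\<Prod>h\<in>insert a T-{a}. (x h - x a))) + (\<Sum>l\<in>T. 1 / ((x b - x l) * (\<Prod>h\<in>insert a T-{l}. (x h - x l))))"
      using fin \<open>a \<notin> T\<close> by (simp add: sum.insert)
    also have "insert a T - {a} = T" using \<open>a \<notin> T\<close> by auto
    also have "(\<Sum>l\<in>T. 1 / ((x b - x l) * (\<Prod>h\<in>insert a T-{l}. (x h - x l)))) = (\<Sum>l\<in>T. 1 / ((x b - x l) * ((x a - x l) * P l)))"
    proof (rule sum.cong[OF refl])
      fix l assume "l \<in> T"
      then have "insert a T - {l} = insert a (T - {l})" using assms by auto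
      then show "1 / ((x b - x l) * (\<Prod>h\<in>insert a T-{l}. (x h - x l))) = 1 / ((x b - x l) * ((x a - x l) * P l))"
        using assms by (simp add: prod.insert P_def)
    qed
    finally show ?thesis .
  qed
  have pa: "(\<Prod>h\<in>insert a T. (x h - x b)) = (x a - x b) * (\<Prod>h\<in>T. (x h - x b))"
    using fin \<open>a \<notin> T\<close> by simp
  have db: "dd x (insert b T) = 1 / (\<Prod>h\<in>T. (x h - x b)) + (\<Sum>l\<in>T. 1 / ((x b - x l) * P l))"
    using dd_ins[OF fin \<open>b \<notin> T\<close>] by (simp add: P_def)
  have da: "dd x (insert a T) = 1 / (\<Prod>h\<in>T. (x h - x a)) + (\<Sum>l\<in>T. 1 / ((x a - x l) * P l))"
    using dd_ins[OF fin \<open>a \<notin> T\<close>] by (simp add: P_def)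
  have sw: "insert a (insert b T) = insert b (insert a T)" by auto
  have trm: "(x a - x b) * (1 / ((x b - x l) * ((x a - x l) * P l))) = 1 / ((x b - x l) * P l) - 1 / ((x a - x l) * P l)"
    if "l \<in> T" for l
  proof -
    have n1: "x b - x l \<noteq> 0" "x a - x l \<noteq> 0" "P l \<noteq> 0" using Pnz[OF that] dxa[OF that] by auto
    have "1 / ((x b - x l) * P l) - 1 / ((x a - x l) * P l) = ((x a - x l) - (x b - x l)) / ((x b - x l) * ((x a - x l) * P l))"
      using n1 by (simp add: divide_simps)
    then show ?thesis by simp
  qed
  have "(x a - x b) * dd x (insert a (insert b T)) =
     (x a - x b) * (1 / ((x a - x b) * (\<Prod>h\<in>T. (x h - x b))))
     + (x a - x b) * (1 / ((x b - x a) * (\<Prod>h\<in>T. (x h - x a))))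
     + (\<Sum>l\<in>T. (x a - x b) * (1 / ((x b - x l) * ((x a - x l) * P l))))"
    unfolding sw e1 e2 pa by (simp add: algebra_simps sum_distrib_left)
  also have "\<dots> = 1 / (\<Prod>h\<in>T. (x h - x b)) - 1 / (\<Prod>h\<in>T. (x h - x a))
     + (\<Sum>l\<in>T. 1 / ((x b - x l) * P l) - 1 / ((x a - x l) * P l))"
  proof -
    have t1: "(x a - x b) * (1 / ((x a - x b) * (\<Prod>h\<in>T. (x h - x b)))) = 1 / (\<Prod>h\<in>T. (x h - x b))"
      using ab Qb by simp
    have t2: "(x a - x b) * (1 / ((x b - x a) * (\<Prod>h\<in>T. (x h - x a)))) = - (1 / (\<Prod>h\<in>T. (x h - x a)))"
    proof -
      have ne: "x b - x a \<noteq> 0" using ab by simp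
      show ?thesis using ne Qa by (simp add: divide_simps)
    qed
    have t3: "(\<Sum>l\<in>T. (x a - x b) * (1 / ((x b - x l) * ((x a - x l) * P l)))) = (\<Sum>l\<in>T. 1 / ((x b - x l) * P l) - 1 / ((x a - x l) * P l))"
      using trm by (rule sum.cong[OF refl])
    show ?thesis unfolding t1 t2 t3 by simp
  qed
  also have "\<dots> = dd x (insert b T) - dd x (insert a T)"
    unfolding da db by (simp add: sum_subtractf)
  finally show ?thesis .
qed

lemma dd_zero:
  "finite S \<Longrightarrow> inj_on x S \<Longrightarrow> 2 \<le> card S \<Longrightarrow> dd x S = 0"
proof (induction "card S" arbitrary: S rule: less_induct)
  case less
  from less.prems obtain a b where ab: "a \<in> S" "b \<in> S" "a \<noteq> b"
    by (metis One_nat_def card_le_Suc0_iff_eq not_less_eq_eq numeral_2_eq_2)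
  define T where "T = S - {a, b}"
  have S: "S = insert a (insert b T)" using ab T_def by auto
  have fT: "finite T" using less.prems T_def by auto
  have aT: "a \<notin> T" "b \<notin> T" using T_def by auto
  have eq: "dd x (insert b T) = dd x (insert a T)"
  proof (cases "T = {}")
    case True then show ?thesis by (simp add: dd_single)
  next
    case False
    have c1: "card (insert b T) < card S" "card (insert a T) < card S"
      using S fT aT ab by (simp_all add: card_insert_if)
    have c2: "2 \<le> card (insert b T)" "2 \<le> card (insert a T)"
      using False fT aT by (auto simp: card_insert_if Suc_le_eq card_gt_0_iff)
    have i: "inj_on x (insert b T)" "inj_on x (insert a T)"
      using less.prems(2) S by (auto intro: inj_on_subset)
    show ?thesis using less.hyps[OF c1(1) _ i(1) c2(1)] less.hyps[OF c1(2) _ i(2) c2(2)] fT by simp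
  qed
  have "(x a - x b) * dd x S = 0"
    using dd_rec[OF fT aT ab(3)] less.prems(2) S eq by simp
  moreover have "x a \<noteq> x b" using less.prems(2) ab by (auto simp: inj_on_def)
  ultimately show ?case by simp
qed

definition cc :: "(nat \<Rightarrow> real) \<Rightarrow> nat \<Rightarrow> nat \<Rightarrow> nat \<Rightarrow> real" where
  "cc b k n l = (\<Prod>h\<in>{k<..n}. b h) / (\<Prod>h\<in>{k..n}-{l}. (b h - b l))"

lemma cc_rec:
  assumes "k \<le> l" "l \<le> m" "b (Suc m) \<noteq> b l"
  shows "b (Suc m) * cc b k m l = (b (Suc m) - b l) * cc b k (Suc m) l"
proof -
  have s1: "{k<..Suc m} = insert (Suc m) {k<..m}" using assms by auto
  have s2: "{k..Suc m} - {l} = insert (Suc m) ({k..m} - {l})" using assms by auto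
  have ne: "b (Suc m) - b l \<noteq> 0" using assms by simp
  have fin: "finite ({k..m} - {l})" "Suc m \<notin> {k..m} - {l}" "finite {k<..m}" "Suc m \<notin> {k<..m}" by auto
  define P where "P = (\<Prod>h\<in>{k<..m}. b h)"
  define Q where "Q = (\<Prod>h\<in>{k..m} - {l}. (b h - b l))"
  have e: "(b (Suc m) - b l) * (b (Suc m) * P / ((b (Suc m) - b l) * Q)) = b (Suc m) * (P / Q)"
    using ne by simp
  show ?thesis unfolding cc_def s1 s2 prod.insert[OF fin(1,2)] prod.insert[OF fin(3,4)]
    using e unfolding P_def Q_def by simp
qed

lemma cc_sum:
  assumes "inj_on b {k..n}" "k \<le> n"
  shows "(\<Sum>l\<in>{k..n}. cc b k n l) = (if n = k then 1 else 0)"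
proof -
  have "(\<Sum>l\<in>{k..n}. cc b k n l) = (\<Prod>h\<in>{k<..n}. b h) * dd b {k..n}"
    unfolding cc_def dd_def by (simp add: sum_distrib_left)
  moreover have "n \<noteq> k \<Longrightarrow> dd b {k..n} = 0"
    using assms by (intro dd_zero) auto
  moreover have "n = k \<Longrightarrow> (\<Sum>l\<in>{k..n}. cc b k n l) = 1"
    by (simp add: cc_def)
  ultimately show ?thesis by auto
qed

definition Fm :: "nat \<Rightarrow> (nat \<Rightarrow> nat \<Rightarrow> real) \<Rightarrow> (nat \<Rightarrow> nat) \<Rightarrow> (nat \<Rightarrow> nat) \<Rightarrow> real" where
  "Fm r b k m = (\<Sum>l\<in>(\<Pi>\<^sub>E j\<in>{1..<r}. {k j..m j}).
      (\<Prod>j\<in>{1..<r}. cc (b j) (k j) (m j) (l j)) *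
      (\<Prod>f\<in>{1..m r}. b r f / (b r f + (\<Sum>g\<in>{1..<r}. b g (l g)))))"

lemma Fm_rec:
  assumes r1: "1 \<le> r"
    and km: "\<And>j. j \<in> {1..<r} \<Longrightarrow> 1 \<le> k j \<and> k j \<le> m j"
    and mr: "1 \<le> m r"
    and bpos: "\<And>j h. j \<in> {1..r} \<Longrightarrow> 1 \<le> h \<Longrightarrow> b j h > 0"
    and binj: "\<And>j. j \<in> {1..<r} \<Longrightarrow> inj_on (b j) {k j..m j}"
  shows "(\<Sum>i\<in>{1..r}. b i (m i)) * Fm r b k m = (\<Sum>i\<in>{1..r}. b i (m i) * Fm r b k (m(i := m i - 1)))"
proof -
  define J where "J = {1..<r}"
  define S where "S = (\<Pi>\<^sub>E j\<in>J. {k j..m j})"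
  define Lam where "Lam l = (\<Sum>g\<in>J. b g (l g))" for l
  define Phi where "Phi q l = (\<Prod>f\<in>{1..q}. b r f / (b r f + Lam l))" for q l
  define C where "C m' l = (\<Prod>j\<in>J. cc (b j) (k j) (m' j) (l j))" for m' l
  define T where "T l = C m l * Phi (m r) l" for l
  have rJ: "r \<notin> J" unfolding J_def by auto
  have finS: "finite S" unfolding S_def J_def by (intro finite_PiE) auto
  have FmE: "Fm r b k m' = (\<Sum>l\<in>(\<Pi>\<^sub>E j\<in>J. {k j..m' j}). C m' l * Phi (m' r) l)" for m'
    unfolding Fm_def J_def C_def Phi_def Lam_def by simp
  have Lam_nn: "Lam l \<ge> 0" if "l \<in> S" for l
    unfolding Lam_def
  proof (rule sum_nonneg)
    fix g assume g: "g \<in> J"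
    then have "1 \<le> l g" using that km unfolding S_def J_def by (force simp: PiE_def Pi_def)
    then show "0 \<le> b g (l g)" using bpos[of g "l g"] g unfolding J_def by force
  qed
  have stepJ: "b i (m i) * Fm r b k (m(i := m i - 1)) = (\<Sum>l\<in>S. (b i (m i) - b i (l i)) * T l)"
    if iJ: "i \<in> J" for i
  proof -
    define m' where "m' = m(i := m i - 1)"
    have ki: "1 \<le> k i" "k i \<le> m i" using km iJ unfolding J_def by auto
    have m'r: "m' r = m r" using rJ iJ unfolding m'_def by auto
    have S': "(\<Pi>\<^sub>E j\<in>J. {k j..m' j}) = {l\<in>S. l i \<noteq> m i}"
    proof (intro set_eqI iffI)
      fix l assume "l \<in> (\<Pi>\<^sub>E j\<in>J. {k j..m' j})"
      then show "l \<in> {l\<in>S. l i \<noteq> m i}" unfolding S_def m'_def using iJ ki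
        by (auto simp: PiE_def Pi_def split: if_splits)
    next
      fix l assume "l \<in> {l\<in>S. l i \<noteq> m i}"
      then show "l \<in> (\<Pi>\<^sub>E j\<in>J. {k j..m' j})" unfolding S_def m'_def using iJ
        by (auto simp: PiE_def Pi_def)
    qed
    have "(\<Sum>l\<in>S. (b i (m i) - b i (l i)) * T l) = (\<Sum>l\<in>{l\<in>S. l i \<noteq> m i}. (b i (m i) - b i (l i)) * T l)"
      by (rule sum.mono_neutral_right) (use finS in auto)
    also have "\<dots> = (\<Sum>l\<in>{l\<in>S. l i \<noteq> m i}. b i (m i) * (C m' l * Phi (m' r) l))"
    proof (rule sum.cong[OF refl])
      fix l assume l: "l \<in> {l\<in>S. l i \<noteq> m i}"
      then have li: "k i \<le> l i" "l i < m i" using iJ unfolding S_def by (auto simp: PiE_def Pi_def)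
      have "m i \<noteq> 0" using li by auto
      then obtain p where p: "m i = Suc p" using not0_implies_Suc by blast
      have inj: "b i (m i) \<noteq> b i (l i)"
        using binj[OF iJ[unfolded J_def]] li ki unfolding inj_on_def by force
      have crec: "b i (m i) * cc (b i) (k i) (m' i) (l i) = (b i (m i) - b i (l i)) * cc (b i) (k i) (m i) (l i)"
        using cc_rec[of "k i" "l i" p "b i"] li inj p unfolding m'_def by simp
      have fJ: "finite J" unfolding J_def by simp
      define R where "R = (\<Prod>j\<in>J-{i}. cc (b j) (k j) (m j) (l j))"
      have C1: "C m' l = cc (b i) (k i) (m' i) (l i) * R"
        unfolding C_def R_def using prod.remove[OF fJ iJ] unfolding m'_def by (simp add: prod.remove[OF fJ iJ])
      have C2: "C m l = cc (b i) (k i) (m i) (l i) * R"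
        unfolding C_def R_def by (simp add: prod.remove[OF fJ iJ])
      have "b i (m i) * (C m' l * Phi (m' r) l) = (b i (m i) * cc (b i) (k i) (m' i) (l i)) * R * Phi (m r) l"
        unfolding C1 m'r by (simp add: mult.assoc)
      also have "\<dots> = (b i (m i) - b i (l i)) * T l"
        unfolding crec T_def C2 by (simp add: mult.assoc)
      finally show "(b i (m i) - b i (l i)) * T l = b i (m i) * (C m' l * Phi (m' r) l)" by simp
    qed
    also have "\<dots> = b i (m i) * Fm r b k m'"
      unfolding FmE S' by (simp add: sum_distrib_left)
    finally show ?thesis unfolding m'_def by simp
  qed
  have stepR: "b r (m r) * Fm r b k (m(r := m r - 1)) = (\<Sum>l\<in>S. (b r (m r) + Lam l) * T l)"
  proof -
    define m' where "m' = m(r := m r - 1)"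
    have eqJ: "\<And>j. j \<in> J \<Longrightarrow> m' j = m j" using rJ unfolding m'_def by auto
    have S': "(\<Pi>\<^sub>E j\<in>J. {k j..m' j}) = S" unfolding S_def using eqJ by (intro PiE_cong) auto
    have C': "C m' l = C m l" for l unfolding C_def using eqJ by (intro prod.cong) auto
    have "m r \<noteq> 0" using mr by auto
    then obtain p where p: "m r = Suc p" using not0_implies_Suc by blast
    have "b r (m r) * (C m' l * Phi (m' r) l) = (b r (m r) + Lam l) * T l" if l: "l \<in> S" for l
    proof -
      have iv: "{1..Suc p} = insert (Suc p) {1..p}" by auto
      have pos: "b r (Suc p) + Lam l > 0" using bpos[of r "Suc p"] r1 Lam_nn[OF l] by simp
      have "Phi (m r) l = b r (Suc p) / (b r (Suc p) + Lam l) * Phi p l"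
        unfolding Phi_def p iv by simp
      then show ?thesis unfolding T_def C' using pos p by (simp add: m'_def)
    qed
    then have "b r (m r) * Fm r b k m' = (\<Sum>l\<in>S. (b r (m r) + Lam l) * T l)"
      unfolding FmE S' by (simp add: sum_distrib_left)
    then show ?thesis unfolding m'_def .
  qed
  have FmS: "Fm r b k m = (\<Sum>l\<in>S. T l)" unfolding FmE S_def T_def by simp
  have iv: "{1..r} = insert r J" unfolding J_def using r1 by auto
  have fJ: "finite J" unfolding J_def by simp
  have "(\<Sum>i\<in>{1..r}. b i (m i) * Fm r b k (m(i := m i - 1)))
      = (\<Sum>l\<in>S. (b r (m r) + Lam l) * T l) + (\<Sum>i\<in>J. \<Sum>l\<in>S. (b i (m i) - b i (l i)) * T l)"
    unfolding iv using fJ rJ stepJ stepR by simp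
  also have "(\<Sum>i\<in>J. \<Sum>l\<in>S. (b i (m i) - b i (l i)) * T l) = (\<Sum>l\<in>S. ((\<Sum>i\<in>J. b i (m i)) - Lam l) * T l)"
    by (subst sum.swap) (simp add: Lam_def sum_distrib_right sum_subtractf left_diff_distrib)
  also have "(\<Sum>l\<in>S. (b r (m r) + Lam l) * T l) + \<dots> = (\<Sum>l\<in>S. (b r (m r) + (\<Sum>i\<in>J. b i (m i))) * T l)"
    by (simp add: sum.distrib[symmetric] algebra_simps)
  also have "\<dots> = (\<Sum>i\<in>{1..r}. b i (m i)) * Fm r b k m"
    unfolding FmS iv using fJ rJ by (simp add: sum_distrib_left)
  finally show ?thesis by (rule sym)
qed

lemma urn_zero:
  assumes "j \<in> {1..<r}" "m j < k j"
  shows "urn_prob N r \<alpha> m k = 0"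
  using assms
proof (induction N arbitrary: m)
  case 0
  then have "\<not> (\<forall>j\<in>{1..<r}. m j = k j)" by force
  then show ?case by simp
next
  case (Suc N)
  have "urn_prob N r \<alpha> (m(l := m l - 1)) k = 0" for l
  proof -
    have "(m(l := m l - 1)) j < k j" using Suc.prems by auto
    then show ?thesis using Suc.IH[of "m(l := m l - 1)"] Suc.prems(1) by blast
  qed
  moreover have "\<not> (\<forall>j\<in>{1..<r}. m j = k j)" using Suc.prems by force
  ultimately show ?case by (auto simp del: urn_prob.simps simp add: urn_prob.simps(2))
qed

lemma Fm_zero:
  assumes "j \<in> {1..<r}" "m j < k j"
  shows "Fm r b k m = 0"
proof -
  have "(\<Pi>\<^sub>E j\<in>{1..<r}. {k j..m j}) = {}"
    using assms by (auto simp: PiE_eq_empty_iff)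
  then show ?thesis unfolding Fm_def by simp
qed

lemma Fm_boundary:
  assumes "m r = 0" and km: "\<And>j. j \<in> {1..<r} \<Longrightarrow> k j \<le> m j"
    and binj: "\<And>j. j \<in> {1..<r} \<Longrightarrow> inj_on (b j) {k j..m j}"
  shows "Fm r b k m = (if \<forall>j\<in>{1..<r}. m j = k j then 1 else 0)"
proof -
  have "Fm r b k m = (\<Sum>l\<in>(\<Pi>\<^sub>E j\<in>{1..<r}. {k j..m j}). \<Prod>j\<in>{1..<r}. cc (b j) (k j) (m j) (l j))"
    unfolding Fm_def using assms(1) by simp
  also have "\<dots> = (\<Prod>j\<in>{1..<r}. \<Sum>l\<in>{k j..m j}. cc (b j) (k j) (m j) l)"
    by (rule prod_sum_PiE[symmetric]) auto
  also have "\<dots> = (\<Prod>j\<in>{1..<r}. (if m j = k j then 1 else 0))"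
    by (rule prod.cong[OF refl]) (use cc_sum binj km in auto)
  also have "\<dots> = (if \<forall>j\<in>{1..<r}. m j = k j then 1 else 0)"
    by (auto simp: prod_zero_iff)
  finally show ?thesis .
qed

lemma draw_prob:
  assumes "l \<in> {1..r}" and m1: "\<And>j. j \<in> {1..r} \<Longrightarrow> 1 \<le> m j"
    and pos: "\<And>j h. 1 \<le> j \<Longrightarrow> j \<le> r \<Longrightarrow> 1 \<le> h \<Longrightarrow> \<alpha> j h > 0"
  shows "urn_draw_prob r \<alpha> m l = (1 / \<alpha> l (m l)) / (\<Sum>h\<in>{1..r}. 1 / \<alpha> h (m h))"
proof -
  define W where "W = (\<Prod>j\<in>{1..r}. \<alpha> j (m j))"
  have Wp: "W > 0" unfolding W_def using pos m1 by (intro prod_pos) auto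
  have ap: "\<alpha> h (m h) > 0" if "h \<in> {1..r}" for h using pos m1 that by auto
  have w: "urn_weight r \<alpha> m h = W * (1 / \<alpha> h (m h))" if h: "h \<in> {1..r}" for h
  proof -
    have "W = \<alpha> h (m h) * (\<Prod>j\<in>{1..r}-{h}. \<alpha> j (m j))"
      unfolding W_def using h by (simp add: prod.remove)
    moreover have "urn_weight r \<alpha> m h = (\<Prod>j\<in>{1..r}-{h}. \<alpha> j (m j))"
      unfolding urn_weight_def using m1 h by (auto intro!: prod.cong) (use m1 in force)+
    ultimately show ?thesis using ap[OF h] by simp
  qed
  have "(\<Sum>h\<in>{1..r}. urn_weight r \<alpha> m h) = W * (\<Sum>h\<in>{1..r}. 1 / \<alpha> h (m h))"
    using w by (simp add: sum_distrib_left)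
  then show ?thesis unfolding urn_draw_prob_def using w[OF assms(1)] Wp by simp
qed

lemma sum_upd_dec:
  fixes m :: "nat \<Rightarrow> nat"
  assumes "l \<in> A" "finite A" "1 \<le> m l"
  shows "(\<Sum>j\<in>A. (m(l := m l - 1)) j) + 1 = (\<Sum>j\<in>A. m j)"
proof -
  have "(\<Sum>j\<in>A. (m(l := m l - 1)) j) = (m l - 1) + (\<Sum>j\<in>A-{l}. m j)"
    using assms by (simp add: sum.remove)
  moreover have "(\<Sum>j\<in>A. m j) = m l + (\<Sum>j\<in>A-{l}. m j)"
    using assms by (simp add: sum.remove)
  moreover have x: "m l - 1 + 1 = m l" using assms(3) by simp
  ultimately show ?thesis by (metis add.assoc add.commute)
qed

lemma urn_main:
  fixes r :: nat and \<alpha> :: "nat \<Rightarrow> nat \<Rightarrow> real" and k :: "nat \<Rightarrow> nat"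
  assumes r2: "r \<ge> 2"
    and pos: "\<And>j h. 1 \<le> j \<Longrightarrow> j \<le> r \<Longrightarrow> 1 \<le> h \<Longrightarrow> \<alpha> j h > 0"
    and dist: "\<And>j h l. 1 \<le> j \<Longrightarrow> j \<le> r \<Longrightarrow> 1 \<le> h \<Longrightarrow> h < l \<Longrightarrow> \<alpha> j h \<noteq> \<alpha> j l"
    and k1: "\<And>j. 1 \<le> j \<Longrightarrow> j < r \<Longrightarrow> 1 \<le> k j"
    and b_def: "b = (\<lambda>j h. 1 / \<alpha> j h)"
  shows "(\<Sum>j\<in>{1..r}. m j) \<le> N \<Longrightarrow> urn_prob N r \<alpha> m k = Fm r b k m"
proof (induction N arbitrary: m)
  case (0 m)
  note IH = this
  show ?case
  proof (cases "\<exists>j\<in>{1..<r}. m j < k j")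
    case True
    then obtain j where "j \<in> {1..<r}" "m j < k j" by blast
    then show ?thesis using urn_zero Fm_zero by metis
  next
    case False
    then have km: "\<And>j. j \<in> {1..<r} \<Longrightarrow> k j \<le> m j" by force
    have mr: "m r = 0" using IH r2 by auto
    have binj: "inj_on (b j) {k j..m j}" if "j \<in> {1..<r}" for j
    proof (rule inj_onI)
      fix x y assume "x \<in> {k j..m j}" "y \<in> {k j..m j}" "b j x = b j y"
      moreover have "1 \<le> k j" using k1 that by auto
      ultimately show "x = y" using dist[of j x y] dist[of j y x] that
        unfolding b_def by (cases x y rule: linorder_cases) auto
    qed
    show ?thesis using Fm_boundary[of m r k b, OF mr km binj] by simp
  qed
next
  case (Suc N m)
  show ?case
  proof (cases "\<exists>j\<in>{1..<r}. m j < k j")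
    case True
    then obtain j where "j \<in> {1..<r}" "m j < k j" by blast
    then show ?thesis using urn_zero Fm_zero by metis
  next
    case False
    then have km: "\<And>j. j \<in> {1..<r} \<Longrightarrow> 1 \<le> k j \<and> k j \<le> m j" using k1 by force
    have binj: "inj_on (b j) {k j..m j}" if "j \<in> {1..<r}" for j
    proof (rule inj_onI)
      fix x y assume "x \<in> {k j..m j}" "y \<in> {k j..m j}" "b j x = b j y"
      moreover have "1 \<le> k j" using k1 that by auto
      ultimately show "x = y" using dist[of j x y] dist[of j y x] that
        unfolding b_def by (cases x y rule: linorder_cases) auto
    qed
    show ?thesis
    proof (cases "m r = 0")
      case True
      then have "urn_stopped r m" unfolding urn_stopped_def by simp
      then show ?thesis using Fm_boundary[of m r k b, OF True _ binj] km by simp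
    next
      case False
      have ns: "\<not> urn_stopped r m"
      proof -
        have o: "1 \<in> {1..<r}" using r2 by auto
        then have "m 1 \<noteq> 0" using km[OF o] by auto
        then show ?thesis using False o unfolding urn_stopped_def by auto
      qed
      have m1: "1 \<le> m j" if "j \<in> {1..r}" for j
        using km[of j] False that by (cases "j = r") auto
      have bpos: "b j h > 0" if "j \<in> {1..r}" "1 \<le> h" for j h
        using pos[of j h] that unfolding b_def by auto
      define B where "B = (\<Sum>i\<in>{1..r}. b i (m i))"
      have Bp: "B > 0" unfolding B_def using bpos m1 r2
        by (intro sum_pos) auto
      have IHl: "urn_prob N r \<alpha> (m(l := m l - 1)) k = Fm r b k (m(l := m l - 1))" if l: "l \<in> {1..r}" for l
      proof -
        have "(\<Sum>j\<in>{1..r}. (m(l := m l - 1)) j) + 1 = (\<Sum>j\<in>{1..r}. m j)"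
          by (rule sum_upd_dec[of l "{1..r}" m, OF l _ m1[OF l]]) simp
        then have "(\<Sum>j\<in>{1..r}. (m(l := m l - 1)) j) \<le> N" using Suc.prems by linarith
        then show ?thesis using Suc.IH by blast
      qed
      have "urn_prob (Suc N) r \<alpha> m k = (\<Sum>l\<in>{1..r}. urn_draw_prob r \<alpha> m l * urn_prob N r \<alpha> (m(l := m l - 1)) k)"
        using ns by simp
      also have "\<dots> = (\<Sum>l\<in>{1..r}. (b l (m l) / B) * Fm r b k (m(l := m l - 1)))"
      proof (rule sum.cong[OF refl])
        fix l assume l: "l \<in> {1..r}"
        have "urn_draw_prob r \<alpha> m l = b l (m l) / B"
          using draw_prob[OF l m1 pos] unfolding B_def b_def by simp
        then show "urn_draw_prob r \<alpha> m l * urn_prob N r \<alpha> (m(l := m l - 1)) k = (b l (m l) / B) * Fm r b k (m(l := m l - 1))"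
          using IHl[OF l] by simp
      qed
      also have "\<dots> = (1 / B) * (\<Sum>l\<in>{1..r}. b l (m l) * Fm r b k (m(l := m l - 1)))"
        by (simp add: sum_distrib_left)
      also have "\<dots> = (1 / B) * (B * Fm r b k m)"
        using Fm_rec[of r k m b] r2 km False bpos binj unfolding B_def by simp
      also have "\<dots> = Fm r b k m" using Bp by simp
      finally show ?thesis .
    qed
  qed
qed

lemma cc_alpha:
  fixes a :: "nat \<Rightarrow> real"
  assumes apos: "\<And>h. h \<in> {k..n} \<Longrightarrow> a h > 0" and l: "k \<le> l" "l \<le> n"
    and inj: "inj_on a {k..n}"
  shows "cc (\<lambda>h. 1 / a h) k n l = a k * a l ^ (n - k) / a l / (\<Prod>h\<in>{k..n}-{l}. (a l - a h))"
proof -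
  define D where "D = {k..n} - {l}"
  define P where "P = (\<Prod>h\<in>{k<..n}. a h)"
  define Q where "Q = (\<Prod>h\<in>D. (a l - a h))"
  have Pp: "P > 0" unfolding P_def using apos by (intro prod_pos) auto
  have alp: "a l > 0" "a k > 0" using apos l by auto
  have Qnz: "Q \<noteq> 0" unfolding Q_def D_def using inj l by (auto simp: prod_zero_iff inj_on_def)
  have cD: "card D = n - k" unfolding D_def using l by simp
  have num: "(\<Prod>h\<in>{k<..n}. 1 / a h) = 1 / P" unfolding P_def by (simp add: prod_dividef)
  have aD: "(\<Prod>h\<in>D. a h) = a k * P / a l"
  proof -
    have "{k..n} = insert k {k<..n}" using l by auto
    then have "(\<Prod>h\<in>{k..n}. a h) = a k * P" unfolding P_def by simp
    moreover have "(\<Prod>h\<in>{k..n}. a h) = a l * (\<Prod>h\<in>D. a h)"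
      unfolding D_def using l by (simp add: prod.remove)
    ultimately show ?thesis using alp by (simp add: field_simps)
  qed
  have den: "(\<Prod>h\<in>D. (1 / a h - 1 / a l)) = Q / (a k * P / a l * a l ^ (n - k))"
  proof -
    have "(\<Prod>h\<in>D. (1 / a h - 1 / a l)) = (\<Prod>h\<in>D. (a l - a h) / (a h * a l))"
    proof (rule prod.cong[OF refl])
      fix h assume "h \<in> D"
      then have "a h > 0" using apos unfolding D_def by auto
      then show "1 / a h - 1 / a l = (a l - a h) / (a h * a l)" using alp by (simp add: field_simps)
    qed
    also have "\<dots> = Q / ((\<Prod>h\<in>D. a h) * a l ^ card D)"
      unfolding Q_def by (simp add: prod_dividef prod.distrib)
    finally show ?thesis unfolding aD cD .
  qed
  have "cc (\<lambda>h. 1 / a h) k n l = (1 / P) / (Q / (a k * P / a l * a l ^ (n - k)))"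
    unfolding cc_def num using den unfolding D_def by simp
  also have "\<dots> = a k * a l ^ (n - k) / a l / Q"
    using Pp alp Qnz by (simp add: field_simps)
  finally show ?thesis unfolding Q_def D_def .
qed

lemma Phi_alpha:
  fixes x :: "nat \<Rightarrow> real"
  assumes xp: "\<And>f. f \<in> {1..q} \<Longrightarrow> x f > 0" and Ap: "A > 0" and Lnn: "Lam \<ge> 0"
    and SL: "S = A * Lam"
  shows "(\<Prod>f\<in>{1..q}. (1 / x f) / ((1 / x f) + Lam)) = A ^ q / (\<Prod>f\<in>{1..q}. (A + x f * S))"
proof -
  have "(\<Prod>f\<in>{1..q}. (1 / x f) / ((1 / x f) + Lam)) = (\<Prod>f\<in>{1..q}. A / (A + x f * S))"
  proof (rule prod.cong[OF refl])
    fix f assume f: "f \<in> {1..q}"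
    have xf: "x f > 0" using xp f by auto
    then have p1: "1 + Lam * x f > 0" using Lnn by (simp add: add_pos_nonneg)
    have e1: "(1 / x f) / ((1 / x f) + Lam) = 1 / (1 + Lam * x f)"
      using xf by (simp add: field_simps)
    have e2: "A / (A + x f * S) = 1 / (1 + Lam * x f)"
    proof -
      have "A + x f * S = A * (1 + Lam * x f)" unfolding SL by (simp add: algebra_simps)
      then show ?thesis using Ap p1 by simp
    qed
    show "(1 / x f) / ((1 / x f) + Lam) = A / (A + x f * S)" using e1 e2 by simp
  qed
  also have "\<dots> = A ^ q / (\<Prod>f\<in>{1..q}. (A + x f * S))"
    by (simp add: prod_dividef)
  finally show ?thesis .
qed

theorem theorem4:
  fixes r :: nat and \<alpha> :: "nat \<Rightarrow> nat \<Rightarrow> real" and n k :: "nat \<Rightarrow> nat"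
  assumes r2: "r \<ge> 2"
    and pos: "\<And>j h. 1 \<le> j \<Longrightarrow> j \<le> r \<Longrightarrow> 1 \<le> h \<Longrightarrow> \<alpha> j h > 0"
    and dist: "\<And>j h l. 1 \<le> j \<Longrightarrow> j \<le> r \<Longrightarrow> 1 \<le> h \<Longrightarrow> h < l \<Longrightarrow> \<alpha> j h \<noteq> \<alpha> j l"
    and n_pos: "\<And>j. 1 \<le> j \<Longrightarrow> j \<le> r \<Longrightarrow> n j \<ge> 1"
    and k_range: "\<And>j. 1 \<le> j \<Longrightarrow> j < r \<Longrightarrow> 1 \<le> k j \<and> k j \<le> n j"
  shows "urnII_prob r \<alpha> n k =
    (\<Sum>l\<in>(\<Pi>\<^sub>E j\<in>{1..<r}. {k j..n j}).
       ((\<Prod>j\<in>{1..<r}. \<alpha> j (k j)) * (\<Prod>j\<in>{1..<r}. \<alpha> j (l j) ^ (n j - k j + n r - 1)))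
       / ((\<Prod>f\<in>{1..n r}. (\<Prod>j\<in>{1..<r}. \<alpha> j (l j))
              + \<alpha> r f * (\<Sum>g\<in>{1..<r}. (\<Prod>j\<in>{1..<r}. \<alpha> j (l j)) / \<alpha> g (l g)))
          * (\<Prod>j\<in>{1..<r}. \<Prod>h\<in>{k j..n j} - {l j}. (\<alpha> j (l j) - \<alpha> j h))))"
proof -
  define b where "b = (\<lambda>j h. 1 / \<alpha> j h)"
  define J where "J = {1..<r}"
  have k1: "\<And>j. 1 \<le> j \<Longrightarrow> j < r \<Longrightarrow> 1 \<le> k j" using k_range by blast
  have "urnII_prob r \<alpha> n k = Fm r b k n"
    unfolding urnII_prob_def by (rule urn_main[OF r2 pos dist k1 b_def]) auto
  also have "\<dots> = (\<Sum>l\<in>(\<Pi>\<^sub>E j\<in>{1..<r}. {k j..n j}).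
       ((\<Prod>j\<in>{1..<r}. \<alpha> j (k j)) * (\<Prod>j\<in>{1..<r}. \<alpha> j (l j) ^ (n j - k j + n r - 1)))
       / ((\<Prod>f\<in>{1..n r}. (\<Prod>j\<in>{1..<r}. \<alpha> j (l j))
              + \<alpha> r f * (\<Sum>g\<in>{1..<r}. (\<Prod>j\<in>{1..<r}. \<alpha> j (l j)) / \<alpha> g (l g)))
          * (\<Prod>j\<in>{1..<r}. \<Prod>h\<in>{k j..n j} - {l j}. (\<alpha> j (l j) - \<alpha> j h))))"
    unfolding Fm_def
  proof (rule sum.cong[OF refl])
    fix l assume l: "l \<in> (\<Pi>\<^sub>E j\<in>{1..<r}. {k j..n j})"
    then have lr: "k j \<le> l j \<and> l j \<le> n j" if "j \<in> {1..<r}" for j using that by (auto simp: PiE_def Pi_def)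
    have nr: "1 \<le> n r" using n_pos r2 by auto
    define A where "A = (\<Prod>j\<in>{1..<r}. \<alpha> j (l j))"
    define Lam where "Lam = (\<Sum>g\<in>{1..<r}. b g (l g))"
    define Q where "Q j = (\<Prod>h\<in>{k j..n j} - {l j}. (\<alpha> j (l j) - \<alpha> j h))" for j
    define D where "D = (\<Prod>f\<in>{1..n r}. A + \<alpha> r f * (\<Sum>g\<in>{1..<r}. A / \<alpha> g (l g)))"
    have alp: "\<alpha> j (l j) > 0" "\<alpha> j (k j) > 0" if "j \<in> {1..<r}" for j
      using pos[of j "l j"] pos[of j "k j"] lr[OF that] k1[of j] that by auto
    have Ap: "A > 0" unfolding A_def using alp by (intro prod_pos) auto
    have Lnn: "Lam \<ge> 0" unfolding Lam_def b_def using alp by (intro sum_nonneg) (auto intro: less_imp_le)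
    have SL: "(\<Sum>g\<in>{1..<r}. A / \<alpha> g (l g)) = A * Lam"
      unfolding Lam_def b_def by (simp add: sum_distrib_left)
    have ccj: "cc (b j) (k j) (n j) (l j) = \<alpha> j (k j) * \<alpha> j (l j) ^ (n j - k j) / \<alpha> j (l j) / Q j"
      if j: "j \<in> {1..<r}" for j
    proof -
      have inj: "inj_on (\<alpha> j) {k j..n j}"
      proof (rule inj_onI)
        fix x y assume "x \<in> {k j..n j}" "y \<in> {k j..n j}" "\<alpha> j x = \<alpha> j y"
        moreover have "1 \<le> k j" using k1 j by auto
        ultimately show "x = y" using dist[of j x y] dist[of j y x] j
          by (cases x y rule: linorder_cases) auto
      qed
      have ap: "\<alpha> j h > 0" if "h \<in> {k j..n j}" for h
        using pos[of j h] that k1[of j] j by auto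
      show ?thesis unfolding b_def Q_def
        using cc_alpha[of "k j" "n j" "\<alpha> j" "l j", OF ap _ _ inj] lr[OF j] by simp
    qed
    have Phi: "(\<Prod>f\<in>{1..n r}. b r f / (b r f + Lam)) = A ^ n r / D"
      unfolding b_def D_def
      by (rule Phi_alpha[OF _ Ap Lnn SL]) (use pos r2 in auto)
    have pw: "\<alpha> j (k j) * \<alpha> j (l j) ^ (n j - k j) / \<alpha> j (l j) * \<alpha> j (l j) ^ n r
        = \<alpha> j (k j) * \<alpha> j (l j) ^ (n j - k j + n r - 1)" if j: "j \<in> {1..<r}" for j
    proof -
      have e: "n j - k j + n r - 1 = (n j - k j) + (n r - 1)" using nr by simp
      have e2: "\<alpha> j (l j) ^ n r = \<alpha> j (l j) * \<alpha> j (l j) ^ (n r - 1)"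
        using nr by (metis Suc_diff_le diff_Suc_1 power_Suc)
      show ?thesis unfolding e power_add e2 using alp(1)[OF j] by simp
    qed
    have "(\<Prod>j\<in>{1..<r}. cc (b j) (k j) (n j) (l j)) * (\<Prod>f\<in>{1..n r}. b r f / (b r f + (\<Sum>g\<in>{1..<r}. b g (l g))))
        = (\<Prod>j\<in>{1..<r}. \<alpha> j (k j) * \<alpha> j (l j) ^ (n j - k j) / \<alpha> j (l j) / Q j) * (A ^ n r / D)"
      using Phi unfolding Lam_def by (simp add: ccj)
    also have "\<dots> = (\<Prod>j\<in>{1..<r}. \<alpha> j (k j) * \<alpha> j (l j) ^ (n j - k j) / \<alpha> j (l j) * \<alpha> j (l j) ^ n r) / ((\<Prod>j\<in>{1..<r}. Q j) * D)"
    proof -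
      define X where "X j = \<alpha> j (k j) * \<alpha> j (l j) ^ (n j - k j) / \<alpha> j (l j)" for j
      have "(\<Prod>j\<in>{1..<r}. X j / Q j) = (\<Prod>j\<in>{1..<r}. X j) / (\<Prod>j\<in>{1..<r}. Q j)"
        by (rule prod_dividef)
      moreover have "A ^ n r = (\<Prod>j\<in>{1..<r}. \<alpha> j (l j) ^ n r)"
        unfolding A_def by (rule prod_power_distrib)
      moreover have "(\<Prod>j\<in>{1..<r}. X j * \<alpha> j (l j) ^ n r) = (\<Prod>j\<in>{1..<r}. X j) * (\<Prod>j\<in>{1..<r}. \<alpha> j (l j) ^ n r)"
        by (rule prod.distrib)
      ultimately show ?thesis unfolding X_def[symmetric] by simp
    qed
    also have "\<dots> = (\<Prod>j\<in>{1..<r}. \<alpha> j (k j) * \<alpha> j (l j) ^ (n j - k j + n r - 1)) / ((\<Prod>j\<in>{1..<r}. Q j) * D)"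
      using pw by simp
    also have "\<dots> = ((\<Prod>j\<in>{1..<r}. \<alpha> j (k j)) * (\<Prod>j\<in>{1..<r}. \<alpha> j (l j) ^ (n j - k j + n r - 1)))
       / ((\<Prod>f\<in>{1..n r}. (\<Prod>j\<in>{1..<r}. \<alpha> j (l j))
              + \<alpha> r f * (\<Sum>g\<in>{1..<r}. (\<Prod>j\<in>{1..<r}. \<alpha> j (l j)) / \<alpha> g (l g)))
          * (\<Prod>j\<in>{1..<r}. \<Prod>h\<in>{k j..n j} - {l j}. (\<alpha> j (l j) - \<alpha> j h)))"
      unfolding D_def A_def Q_def by (simp add: prod.distrib mult.commute)
    finally show "(\<Prod>j\<in>{1..<r}. cc (b j) (k j) (n j) (l j)) * (\<Prod>f\<in>{1..n r}. b r f / (b r f + (\<Sum>g\<in>{1..<r}. b g (l g))))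
       = ((\<Prod>j\<in>{1..<r}. \<alpha> j (k j)) * (\<Prod>j\<in>{1..<r}. \<alpha> j (l j) ^ (n j - k j + n r - 1)))
       / ((\<Prod>f\<in>{1..n r}. (\<Prod>j\<in>{1..<r}. \<alpha> j (l j))
              + \<alpha> r f * (\<Sum>g\<in>{1..<r}. (\<Prod>j\<in>{1..<r}. \<alpha> j (l j)) / \<alpha> g (l g)))
          * (\<Prod>j\<in>{1..<r}. \<Prod>h\<in>{k j..n j} - {l j}. (\<alpha> j (l j) - \<alpha> j h)))" .
  qed
  finally show ?thesis .
qed

end
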